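(* Let $n\geq7$, let $u,v,u',v'\in G(J(P_n))$ with $u>_{\mathcal R}v$ and $u'>_{\mathcal R}v'$, and suppose $u'v'$ divides $uv$. (1) If $u\in\mathcal A$ and $v\in\mathcal C$, then $u'\in\mathcal A$ and $v'\in\mathcal C$. (2) If $u\in\mathcal B$ and $v\in\mathcal C$, then $u'\in\mathcal B$ and $v'\in\mathcal C$.
   Context: For $m\geq 1$, $P_m$ is the path graph on vertices $x_1,\ldots,x_m$ with edges $\{x_i,x_{i+1}\}$; $J(P_m)$ is its cover ideal (generated by $\prod_{x\in C}x$, $C$ a minimal vertex cover) and $G(I)$ denotes minimal monomial generators. The rooted list $\mathcal R(P_m)$: $\mathcal R(P_1)$ empty; $\mathcal R(P_2)=x_1,x_2$; $\mathcal R(P_3)=x_2,x_1x_3$; $\mathcal R(P_4)=x_1x_3,x_2x_3,x_2x_4$; for $m\geq5$, if $\mathcal R(P_{m-2})=u_1,\ldots,u_r$ and $\mathcal R(P_{m-3})=v_1,\ldots,v_s$, then $\mathcal R(P_m)=x_{m-1}u_1,\ldots,x_{m-1}u_r,x_mx_{m-2}v_1,\ldots,x_mx_{m-2}v_s$; it lists each element of $G(J(P_m))$ once, and $w>_{\mathcal R}w'$ iff $w$ precedes $w'$ in $\mathcal R(P_m)$. For $n\geq7$ the elements of $\mathcal R(P_n)$ are split into four sublists: $\mathcal A$ = those divisible by $x_{n-1}x_{n-3}$ (these are $x_{n-1}x_{n-3}w$, $w\in\mathcal R(P_{n-4})$); $\mathcal B$ = those divisible by $x_{n-1}$ but not $x_{n-3}$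 (these are $x_{n-1}x_{n-2}x_{n-4}w$, $w\in\mathcal R(P_{n-5})$); $\mathcal C$ = those divisible by $x_nx_{n-4}$ (these are $x_nx_{n-2}x_{n-4}w$, $w\in\mathcal R(P_{n-5})$); $\mathcal D$ = those divisible by $x_n$ but not $x_{n-4}$ (these are divisible by $x_nx_{n-2}x_{n-3}$). $\mathcal R(P_n)$ is the concatenation $\mathcal A,\mathcal B,\mathcal C,\mathcal D$. *)

theory Defs
  imports Main "HOL-Library.Multiset"
begin

text \<open>Vertices of the path graph P_m are the indices 1..m (x_i is index i);
  edges are {i, i+1} for 1 <= i < m.  A squarefree monomial prod_{x in C} x is
  represented by its support C :: nat set; general monomials (products) are
  represented as multisets of variable indices (exponent = multiplicity).\<close>

definition is_vertex_cover :: "nat \<Rightarrow> nat set \<Rightarrow> bool" where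
  "is_vertex_cover m C \<longleftrightarrow> C \<subseteq> {1..m} \<and> (\<forall>i. 1 \<le> i \<and> i < m \<longrightarrow> i \<in> C \<or> Suc i \<in> C)"

definition is_min_vertex_cover :: "nat \<Rightarrow> nat set \<Rightarrow> bool" where
  "is_min_vertex_cover m C \<longleftrightarrow> is_vertex_cover m C \<and> (\<forall>D. D \<subset> C \<longrightarrow> \<not> is_vertex_cover m D)"

definition cover_gens :: "nat \<Rightarrow> nat set set" where
  "cover_gens m = {C. is_min_vertex_cover m C}"

definition mon :: "nat set \<Rightarrow> nat multiset" where
  "mon C = mset_set C"

definition mdvd :: "nat multiset \<Rightarrow> nat multiset \<Rightarrow> bool" where
  "mdvd a b \<longleftrightarrow> a \<subseteq># b"

fun rooted :: "nat \<Rightarrow> nat set list" where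
  "rooted 0 = []"
| "rooted (Suc 0) = []"
| "rooted (Suc (Suc 0)) = [{1}, {2}]"
| "rooted (Suc (Suc (Suc 0))) = [{2}, {1, 3}]"
| "rooted (Suc (Suc (Suc (Suc 0)))) = [{1, 3}, {2, 3}, {2, 4}]"
| "rooted (Suc (Suc (Suc (Suc (Suc k))))) =
     map (insert (k + 4)) (rooted (k + 3)) @
     map (\<lambda>w. {k + 5, k + 3} \<union> w) (rooted (k + 2))"

definition R_greater :: "nat \<Rightarrow> nat set \<Rightarrow> nat set \<Rightarrow> bool" where
  "R_greater m w w' \<longleftrightarrow>
     (\<exists>i j. i < j \<and> j < length (rooted m) \<and> rooted m ! i = w \<and> rooted m ! j = w')"

definition subA :: "nat \<Rightarrow> nat set \<Rightarrow> bool" where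
  "subA n w \<longleftrightarrow> w \<in> set (rooted n) \<and> n - 1 \<in> w \<and> n - 3 \<in> w"
definition subB :: "nat \<Rightarrow> nat set \<Rightarrow> bool" where
  "subB n w \<longleftrightarrow> w \<in> set (rooted n) \<and> n - 1 \<in> w \<and> n - 3 \<notin> w"
definition subC :: "nat \<Rightarrow> nat set \<Rightarrow> bool" where
  "subC n w \<longleftrightarrow> w \<in> set (rooted n) \<and> n \<in> w \<and> n - 4 \<in> w"
definition subD :: "nat \<Rightarrow> nat set \<Rightarrow> bool" where
  "subD n w \<longleftrightarrow> w \<in> set (rooted n) \<and> n \<in> w \<and> n - 4 \<notin> w"

end

theory Submission
  imports Defs
begin

lemma rooted_step: "rooted (k+5) = map (insert (k + 4)) (rooted (k + 3)) @
     map (\<lambda>w. {k + 5, k + 3} \<union> w) (rooted (k + 2))"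
proof -
  have "k + 5 = Suc (Suc (Suc (Suc (Suc k))))" by simp
  then show ?thesis by (simp add: eval_nat_numeral)
qed

lemma R1: "w \<in> set (rooted m) \<Longrightarrow> m \<ge> 2 \<Longrightarrow> w \<subseteq> {1..m} \<and> (m \<in> w \<longleftrightarrow> m - 1 \<notin> w)"
proof (induction m arbitrary: w rule: rooted.induct)
  case (6 k)
  have e: "Suc (Suc (Suc (Suc (Suc k)))) = k + 5" by simp
  from "6.prems" have "w \<in> set (rooted (k+5))" by (simp only: e)
  then have "(\<exists>x \<in> set (rooted (k+3)). w = insert (k+4) x) \<or> (\<exists>x \<in> set (rooted (k+2)). w = {k + 5, k + 3} \<union> x)"
    unfolding rooted_step by auto
  then show ?case
  proof
    assume "\<exists>x \<in> set (rooted (k+3)). w = insert (k+4) x"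
    then obtain x where x: "x \<in> set (rooted (k+3))" "w = insert (k+4) x" by blast
    have "x \<subseteq> {1..k+3}" using "6.IH"(1)[of x] x by simp
    then show ?thesis using x by auto
  next
    assume "\<exists>x \<in> set (rooted (k+2)). w = {k + 5, k + 3} \<union> x"
    then obtain x where x: "x \<in> set (rooted (k+2))" "w = {k + 5, k + 3} \<union> x" by blast
    have "x \<subseteq> {1..k+2}" using "6.IH"(2)[of x] x by simp
    then show ?thesis using x by auto
  qed
qed (auto simp: numeral_eq_Suc)

lemma priv:
  assumes "is_min_vertex_cover m C" "x \<in> C"
  shows "(1 < x \<and> x - 1 \<notin> C) \<or> (x < m \<and> Suc x \<notin> C)"
proof -
  have cov: "is_vertex_cover m C" using assms(1) unfolding is_min_vertex_cover_def by blast
  have "C - {x} \<subset> C" using assms(2) by blast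
  then have "\<not> is_vertex_cover m (C - {x})" using assms(1) unfolding is_min_vertex_cover_def by blast
  moreover have "C - {x} \<subseteq> {1..m}" using cov unfolding is_vertex_cover_def by blast
  ultimately obtain i where i: "1 \<le> i" "i < m" "i \<notin> C - {x}" "Suc i \<notin> C - {x}"
    unfolding is_vertex_cover_def by blast
  have "i \<in> C \<or> Suc i \<in> C" using cov i unfolding is_vertex_cover_def by blast
  then show ?thesis using i by auto
qed

lemma R2: "m \<ge> 2 \<Longrightarrow> is_min_vertex_cover m C \<Longrightarrow> C \<in> set (rooted m)"
proof (induction m arbitrary: C rule: nat_less_induct)
  case (1 m)
  have cov: "is_vertex_cover m C" using "1.prems" unfolding is_min_vertex_cover_def by blast
  have sub: "C \<subseteq> {1..m}" using cov unfolding is_vertex_cover_def by blast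
  have ed: "\<And>i. 1 \<le> i \<Longrightarrow> i < m \<Longrightarrow> i \<in> C \<or> Suc i \<in> C" using cov unfolding is_vertex_cover_def by blast
  have pv: "\<And>x. x \<in> C \<Longrightarrow> (1 < x \<and> x - 1 \<notin> C) \<or> (x < m \<and> Suc x \<notin> C)"
    using priv "1.prems"(2) by blast
  have "m = 2 \<or> m = 3 \<or> m = 4 \<or> (\<exists>k. m = k + 5)" using "1.prems"(1)
    by (cases "m \<ge> 5") (auto intro: exI[of _ "m - 5"])
  then consider "m = 2" | "m = 3" | "m = 4" | k where "m = k + 5" by blast
  then show ?case
  proof cases
    case 1
    have "C = {1} \<or> C = {2}"
    proof -
      have c: "C \<subseteq> {1,2}" using sub 1 by auto
      have "1 \<in> C \<or> 2 \<in> C" using ed[of 1] 1 by (simp add: numeral_eq_Suc)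
      moreover have "1 \<in> C \<Longrightarrow> 2 \<notin> C" using pv[of 1] 1 by (auto simp: numeral_eq_Suc)
      ultimately show ?thesis using c by auto
    qed
    then show ?thesis using 1 by (auto simp: numeral_eq_Suc)
  next
    case 2
    have c: "C \<subseteq> {1,2,3}" using sub 2 by auto
    have e1: "1 \<in> C \<or> 2 \<in> C" using ed[of 1] 2 by (simp add: numeral_eq_Suc)
    have e2: "2 \<in> C \<or> 3 \<in> C" using ed[of 2] 2 by (simp add: numeral_eq_Suc)
    have p1: "1 \<in> C \<Longrightarrow> 2 \<notin> C" using pv[of 1] 2 by (auto simp: numeral_eq_Suc)
    have p3: "3 \<in> C \<Longrightarrow> 2 \<notin> C" using pv[of 3] 2 by (auto simp: numeral_eq_Suc)
    have p2: "2 \<in> C \<Longrightarrow> 1 \<notin> C \<or> 3 \<notin> C" using pv[of 2] 2 by (auto simp: numeral_eq_Suc)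
    have "C = {2} \<or> C = {1,3}"
    proof (cases "2 \<in> C")
      case True
      then have "1 \<notin> C" "3 \<notin> C" using p1 p3 by blast+
      then have "C = {2}" using True c by blast
      then show ?thesis by blast
    next
      case False
      then have "1 \<in> C" "3 \<in> C" using e1 e2 by blast+
      then have "C = {1,3}" using False c by blast
      then show ?thesis by blast
    qed
    then show ?thesis using 2 by (auto simp: numeral_eq_Suc)
  next
    case 3
    have c: "C \<subseteq> {1,2,3,4}" using sub 3 by auto
    have e1: "1 \<in> C \<or> 2 \<in> C" using ed[of 1] 3 by (simp add: numeral_eq_Suc)
    have e2: "2 \<in> C \<or> 3 \<in> C" using ed[of 2] 3 by (simp add: numeral_eq_Suc)
    have e3: "3 \<in> C \<or> 4 \<in> C" using ed[of 3] 3 by (simp add: numeral_eq_Suc)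
    have p1: "1 \<in> C \<Longrightarrow> 2 \<notin> C" using pv[of 1] 3 by (auto simp: numeral_eq_Suc)
    have p4: "4 \<in> C \<Longrightarrow> 3 \<notin> C" using pv[of 4] 3 by (auto simp: numeral_eq_Suc)
    have p2: "2 \<in> C \<Longrightarrow> 1 \<notin> C \<or> 3 \<notin> C" using pv[of 2] 3 by (auto simp: numeral_eq_Suc)
    have p3: "3 \<in> C \<Longrightarrow> 2 \<notin> C \<or> 4 \<notin> C" using pv[of 3] 3 by (auto simp: numeral_eq_Suc)
    have "C = {1,3} \<or> C = {2,3} \<or> C = {2,4}"
    proof (cases "1 \<in> C")
      case True
      then have h: "2 \<notin> C" "3 \<in> C" using p1 e2 by blast+
      then have "4 \<notin> C" using p4 by blast
      then have "C = {1,3}" using h True c by blast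
      then show ?thesis by blast
    next
      case False
      then have h: "2 \<in> C" using e1 by blast
      show ?thesis
      proof (cases "3 \<in> C")
        case True
        then have "4 \<notin> C" using p3 h by blast
        then have "C = {2,3}" using h True False c by blast
        then show ?thesis by blast
      next
        case F3: False
        then have "4 \<in> C" using e3 by blast
        then have "C = {2,4}" using h F3 False c by blast
        then show ?thesis by blast
      qed
    qed
    then show ?thesis using 3 by (auto simp: numeral_eq_Suc)
  next
    case (4 k)
    have min: "\<And>D. D \<subset> C \<Longrightarrow> \<not> is_vertex_cover m D" using "1.prems"(2) unfolding is_min_vertex_cover_def by blast
    show ?thesis
    proof (cases "k + 4 \<in> C")
      case True
      have n5: "k + 5 \<notin> C" using pv[of "k+5"] True 4 by (auto simp: add.commute)
      define C' where "C' = C \<inter> {1..k+3}"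
      have rr: "1 \<le> x \<and> x \<le> k + 3" if "x \<in> C" "x \<noteq> k + 4" for x
      proof -
        have "1 \<le> x" "x \<le> k+5" using that sub 4 by auto
        moreover have "x \<noteq> k+5" using that n5 by auto
        ultimately show ?thesis using that(2) by linarith
      qed
      have CC: "C = insert (k+4) C'" using rr True unfolding C'_def by auto
      have "is_min_vertex_cover (k+3) C'"
        unfolding is_min_vertex_cover_def
      proof (intro conjI allI impI)
        show "is_vertex_cover (k + 3) C'" using ed 4 unfolding is_vertex_cover_def C'_def by auto
      next
        fix D assume D: "D \<subset> C'" show "\<not> is_vertex_cover (k + 3) D"
        proof
          assume dc: "is_vertex_cover (k + 3) D"
          have "insert (k+4) D \<subset> C" using D CC unfolding C'_def by auto
          moreover have "is_vertex_cover m (insert (k+4) D)"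
            using dc 4 unfolding is_vertex_cover_def by (auto simp: less_Suc_eq)
          ultimately show False using min by blast
        qed
      qed
      then have "C' \<in> set (rooted (k+3))" using "1.IH" 4 by auto
      then show ?thesis using CC 4 rooted_step by auto
    next
      case False
      have i5: "k + 5 \<in> C" using ed[of "k+4"] False 4 by (auto simp: add.commute)
      have i3: "k + 3 \<in> C" using ed[of "k+3"] False 4 by (auto simp: add.commute)
      define C' where "C' = C \<inter> {1..k+2}"
      have rr: "1 \<le> x \<and> x \<le> k + 2" if "x \<in> C" "x \<noteq> k + 5" "x \<noteq> k + 3" for x
      proof -
        have "1 \<le> x" "x \<le> k+5" using that sub 4 by auto
        moreover have "x \<noteq> k+4" using that False by auto
        ultimately show ?thesis using that(2,3) by linarith
      qed
      have CC: "C = {k+5, k+3} \<union> C'" using rr i5 i3 unfolding C'_def by auto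
      have "is_min_vertex_cover (k+2) C'"
        unfolding is_min_vertex_cover_def
      proof (intro conjI allI impI)
        show "is_vertex_cover (k + 2) C'" using ed 4 unfolding is_vertex_cover_def C'_def by auto
      next
        fix D assume D: "D \<subset> C'" show "\<not> is_vertex_cover (k + 2) D"
        proof
          assume dc: "is_vertex_cover (k + 2) D"
          have "{k+5, k+3} \<union> D \<subset> C" using D CC unfolding C'_def by auto
          moreover have "is_vertex_cover m ({k+5, k+3} \<union> D)"
            using dc 4 unfolding is_vertex_cover_def by (auto simp: less_Suc_eq)
          ultimately show False using min by blast
        qed
      qed
      then have "C' \<in> set (rooted (k+2))" using "1.IH" 4 by auto
      then show ?thesis using CC 4 rooted_step by auto
    qed
  qed
qed

theorem lemma3p10:
  fixes n :: nat and u v u' v' :: "nat set"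
  assumes "n \<ge> 7"
    and "u \<in> cover_gens n" and "v \<in> cover_gens n"
    and "u' \<in> cover_gens n" and "v' \<in> cover_gens n"
    and "R_greater n u v" and "R_greater n u' v'"
    and "mdvd (mon u' + mon v') (mon u + mon v)"
  shows "(subA n u \<and> subC n v \<longrightarrow> subA n u' \<and> subC n v')
       \<and> (subB n u \<and> subC n v \<longrightarrow> subB n u' \<and> subC n v')"
proof -
  have "\<exists>k. n = k + 5" using assms(1) by (intro exI[of _ "n - 5"]) simp
  then obtain k where n: "n = k + 5" by blast
  have k2: "k \<ge> 2" using assms(1) n by simp
  have gen: "\<And>w. w \<in> cover_gens n \<Longrightarrow> w \<in> set (rooted n) \<and> w \<subseteq> {1..n} \<and> (\<forall>i. 1 \<le> i \<and> i < n \<longrightarrow> i \<in> w \<or> Suc i \<in> w)"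
  proof -
    fix w assume "w \<in> cover_gens n"
    then have mw: "is_min_vertex_cover n w" unfolding cover_gens_def by simp
    then have "w \<in> set (rooted n)" using R2 assms(1) by simp
    moreover have "is_vertex_cover n w" using mw unfolding is_min_vertex_cover_def by blast
    ultimately show "w \<in> set (rooted n) \<and> w \<subseteq> {1..n} \<and> (\<forall>i. 1 \<le> i \<and> i < n \<longrightarrow> i \<in> w \<or> Suc i \<in> w)"
      unfolding is_vertex_cover_def by blast
  qed
  define L1 where "L1 = map (insert (k + 4)) (rooted (k + 3))"
  define L2 where "L2 = map (\<lambda>w. {k + 5, k + 3} \<union> w) (rooted (k + 2))"
  have RL: "rooted n = L1 @ L2" unfolding n L1_def L2_def by (rule rooted_step)
  have inL: "\<And>w. w \<in> set (rooted n) \<Longrightarrow> (\<exists>x\<in>set (rooted (k+3)). w = insert (k+4) x) \<or> (\<exists>x\<in>set (rooted (k+2)). w = {k + 5, k + 3} \<union> x)"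
    unfolding RL L1_def L2_def by auto
  have fin: "\<And>w. w \<in> cover_gens n \<Longrightarrow> finite w" using gen finite_subset by blast
  have cnt: "\<And>x. of_bool (x \<in> u') + of_bool (x \<in> v') \<le> (of_bool (x \<in> u) + of_bool (x \<in> v) :: nat)"
  proof -
    fix x
    have "count (mon u' + mon v') x \<le> count (mon u + mon v) x"
      using assms(8) unfolding mdvd_def by (rule mset_subset_eq_count)
    then show "of_bool (x \<in> u') + of_bool (x \<in> v') \<le> (of_bool (x \<in> u) + of_bool (x \<in> v) :: nat)"
      using fin[OF assms(2)] fin[OF assms(3)] fin[OF assms(4)] fin[OF assms(5)] unfolding mon_def by (auto simp: count_mset_set' split: if_splits)
  qed
  have gu: "u \<in> set (rooted n)" "u \<subseteq> {1..n}" "\<And>i j. 1 \<le> i \<Longrightarrow> i < n \<Longrightarrow> j = Suc i \<Longrightarrow> i \<in> u \<or> j \<in> u" using gen[OF assms(2)] by auto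
  have gv: "v \<in> set (rooted n)" "v \<subseteq> {1..n}" "\<And>i j. 1 \<le> i \<Longrightarrow> i < n \<Longrightarrow> j = Suc i \<Longrightarrow> i \<in> v \<or> j \<in> v" using gen[OF assms(3)] by auto
  have gu': "u' \<in> set (rooted n)" "u' \<subseteq> {1..n}" "\<And>i j. 1 \<le> i \<Longrightarrow> i < n \<Longrightarrow> j = Suc i \<Longrightarrow> i \<in> u' \<or> j \<in> u'" using gen[OF assms(4)] by auto
  have gv': "v' \<in> set (rooted n)" "v' \<subseteq> {1..n}" "\<And>i j. 1 \<le> i \<Longrightarrow> i < n \<Longrightarrow> j = Suc i \<Longrightarrow> i \<in> v' \<or> j \<in> v'" using gen[OF assms(5)] by auto
  have r1: "\<And>w. w \<in> set (rooted n) \<Longrightarrow> (k+5 \<in> w \<longleftrightarrow> k+4 \<notin> w)" 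
  proof -
    fix w assume "w \<in> set (rooted n)"
    then have "n \<in> w \<longleftrightarrow> n - 1 \<notin> w" using R1 assms(1) by (simp add: add.commute)
    moreover have "n - 1 = k + 4" using n by (simp add: add.commute)
    ultimately show "k+5 \<in> w \<longleftrightarrow> k+4 \<notin> w" using n by (simp add: add.commute)
  qed
  have main: "k+4 \<in> u' \<and> k+5 \<in> v' \<and> k+3 \<in> v' \<and> k + 4 \<notin> v'"
    if hu: "k+4 \<in> u" and hv: "k+5 \<in> v"
  proof -
    have "k + 5 \<notin> u" using r1 gu(1) hu by (auto simp: add.commute)
    have "k + 4 \<notin> v" using r1 gv(1) hv by (auto simp: add.commute)
    have c5: "of_bool (k+5 \<in> u') + of_bool (k+5 \<in> v') \<le> (1::nat)" using cnt[of "k+5"] \<open>k + 5 \<notin> u\<close> hv by (simp add: add.commute)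
    have c4: "of_bool (k+4 \<in> u') + of_bool (k+4 \<in> v') \<le> (1::nat)" using cnt[of "k+4"] \<open>k + 4 \<notin> v\<close> hu by (simp add: add.commute)
    obtain i j where ij: "i < j" "j < length (rooted n)" "rooted n ! i = u'" "rooted n ! j = v'"
      using assms(7) unfolding R_greater_def by blast
    have "k+4 \<in> u'"
    proof (cases "i < length L1")
      case True
      then have "u' \<in> set L1" using ij unfolding RL by (auto simp: nth_append)
      then show ?thesis unfolding L1_def by (auto simp: add.commute)
    next
      case False
      then have "u' \<in> set L2" "v' \<in> set L2" using ij unfolding RL by (auto simp: nth_append)
      then have "k+5 \<in> u'" "k+5 \<in> v'" unfolding L2_def by (auto simp: add.commute)
      then show ?thesis using c5 by (simp add: add.commute)
    qed
    note a1 = this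
    have a2: "k+4 \<notin> v'" using c4 a1 by (auto simp: add.commute)
    have "k+4 \<in> v' \<or> k+5 \<in> v'" using gv'(3)[of "k+4" "k+5"] n by simp
    then have a3: "k+5 \<in> v'" using a2 by blast
    have "k+3 \<in> v' \<or> k+4 \<in> v'" using gv'(3)[of "k+3" "k+4"] n by simp
    then have a4: "k+3 \<in> v'" using a2 by blast
    show ?thesis using a1 a2 a3 a4 by blast
  qed
  have vC: "k+3 \<in> v \<and> k+2 \<notin> v" if hv: "k+5 \<in> v" "k+1 \<in> v"
  proof -
    have "k+4 \<notin> v" using r1 gv(1) hv by (auto simp: add.commute)
    then obtain x where x: "x\<in>set (rooted (k+2))" "v = {k + 5, k + 3} \<union> x" using inL[OF gv(1)] by (auto simp: add.commute)
    have "x \<subseteq> {1..k+2} \<and> (k+2 \<in> x \<longleftrightarrow> k+1 \<notin> x)" using R1[OF x(1)] k2 by (simp add: add.commute)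
    then show ?thesis using x hv by (auto simp: add.commute)
  qed
  have uL: "\<exists>x\<in>set (rooted (k+3)). u = insert (k+4) x" if "k+4 \<in> u"
  proof -
    have "k+5 \<notin> u" using r1 gu(1) that by (auto simp: add.commute)
    then show ?thesis using inL[OF gu(1)] by (auto simp: add.commute)
  qed
  have P1: "subA n u' \<and> subC n v'" if "subA n u" "subC n v"
  proof -
    have hu: "k+4 \<in> u" "k+2 \<in> u" and hv: "k+5 \<in> v" "k+1 \<in> v" using that n unfolding subA_def subC_def by (auto simp: add.commute)
    obtain x where x: "x\<in>set (rooted (k+3))" "u = insert (k+4) x" using uL hu by blast
    have "x \<subseteq> {1..k+3} \<and> (k+3 \<in> x \<longleftrightarrow> k+2 \<notin> x)" using R1[OF x(1)] k2 by (simp add: add.commute)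
    then have "k+3 \<notin> u" using x hu by (auto simp: add.commute)
    have m: "k+4 \<in> u' \<and> k+5 \<in> v' \<and> k+3 \<in> v' \<and> k + 4 \<notin> v'" using main hu hv by blast
    have "k+3 \<notin> u'" using cnt[of "k+3"] \<open>k+3 \<notin> u\<close> vC[OF hv] m by (auto simp: add.commute)
    have "k+2 \<in> u' \<or> k+3 \<in> u'" using gu'(3)[of "k+2" "k+3"] n by simp
    then have "k+2 \<in> u'" using \<open>k+3 \<notin> u'\<close> by blast
    have "k+2 \<notin> v'" using cnt[of "k+2"] \<open>k+2 \<in> u'\<close> vC[OF hv] hu by (auto simp: add.commute)
    have "k+1 \<in> v' \<or> k+2 \<in> v'" using gv'(3)[of "k+1" "k+2"] n by simp
    then have "k+1 \<in> v'" using \<open>k+2 \<notin> v'\<close> by blast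
    show ?thesis unfolding subA_def subC_def using gu'(1) gv'(1) m \<open>k+2 \<in> u'\<close> \<open>k+1 \<in> v'\<close> n by (auto simp: add.commute)
  qed
  have P2: "subB n u' \<and> subC n v'" if "subB n u" "subC n v"
  proof -
    have hu: "k+4 \<in> u" "k+2 \<notin> u" and hv: "k+5 \<in> v" "k+1 \<in> v" using that n unfolding subB_def subC_def by (auto simp: add.commute)
    have m: "k+4 \<in> u' \<and> k+5 \<in> v' \<and> k+3 \<in> v' \<and> k + 4 \<notin> v'" using main hu hv by blast
    have "k+2 \<notin> u'" "k+2 \<notin> v'" using cnt[of "k+2"] hu vC[OF hv] by (auto simp: add.commute)
    have "k+1 \<in> v' \<or> k+2 \<in> v'" using gv'(3)[of "k+1" "k+2"] n by simp
    then have "k+1 \<in> v'" using \<open>k+2 \<notin> v'\<close> by blast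
    show ?thesis unfolding subB_def subC_def using gu'(1) gv'(1) m \<open>k+2 \<notin> u'\<close> \<open>k+1 \<in> v'\<close> n by (auto simp: add.commute)
  qed
  show ?thesis using P1 P2 by blast
qed

end
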